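(* With $\theta$ and $\Theta=\theta\vee\widetilde\theta$ as in the context, $c(\Theta)=c(\theta)$.
   Context: $\theta:\mathbb{A}\to\mathbb{A}^\lambda$ is a primitive substitution of constant length $\lambda\ge2$ (some iterate $\theta^k(a)$ contains all letters for each $a$) with $\theta(a_0)_0=a_0$ for some $a_0$, injective on letters, with infinite subshift. Column number of a substitution $\zeta$ over $\mathbb{B}$: $c(\zeta)=\min_{k\ge1,0\le j<\lambda^k}|\{\zeta^k(b)_j:b\in\mathbb{B}\}|$. $\mathcal{X}$ is the set of $M\subset\mathbb{A}$ with $|M|=c(\theta)$ and $M=\{\theta^k(a)_j:a\in\mathbb{A}\}$ for some $k\ge1$, $0\le j<\lambda^k$; $\widetilde\theta(M)_j=\{\theta(a)_j:a\in M\}$. $\overline{\mathcal{X}}=\{(a,M):M\in\mathcal{X},a\in M\}$ and $\Theta:\overline{\mathcal{X}}\to\overline{\mathcal{X}}^\lambda$, $\Theta(a,M)_j=(\theta(a)_j,\widetilde\theta(M)_j)$. *)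

theory Defs
  imports Main
begin

fun subst_iter :: "('a \<Rightarrow> 'a list) \<Rightarrow> nat \<Rightarrow> 'a \<Rightarrow> 'a list" where
  "subst_iter \<zeta> 0 b = [b]"
| "subst_iter \<zeta> (Suc k) b = concat (map \<zeta> (subst_iter \<zeta> k b))"

definition column_number :: "'a set \<Rightarrow> nat \<Rightarrow> ('a \<Rightarrow> 'a list) \<Rightarrow> nat" where
  "column_number B L \<zeta> =
     Min {card {subst_iter \<zeta> k b ! j | b. b \<in> B} | k j. k \<ge> 1 \<and> j < L ^ k}"

definition subst_language :: "'a set \<Rightarrow> ('a \<Rightarrow> 'a list) \<Rightarrow> 'a list set" where
  "subst_language A \<theta> = {w. \<exists>k a u v. a \<in> A \<and> subst_iter \<theta> k a = u @ w @ v}"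

definition subshift :: "'a set \<Rightarrow> ('a \<Rightarrow> 'a list) \<Rightarrow> (int \<Rightarrow> 'a) set" where
  "subshift A \<theta> = {x. \<forall>i n. map (\<lambda>m. x (i + int m)) [0..<n] \<in> subst_language A \<theta>}"

definition primitive_subst :: "'a set \<Rightarrow> ('a \<Rightarrow> 'a list) \<Rightarrow> bool" where
  "primitive_subst A \<theta> \<longleftrightarrow> (\<exists>k\<ge>1. \<forall>a\<in>A. A \<subseteq> set (subst_iter \<theta> k a))"

definition min_columns :: "'a set \<Rightarrow> nat \<Rightarrow> ('a \<Rightarrow> 'a list) \<Rightarrow> 'a set set" where
  "min_columns A L \<theta> = {M. M \<subseteq> A \<and> card M = column_number A L \<theta> \<and>
      (\<exists>k j. k \<ge> 1 \<and> j < L ^ k \<and> M = {subst_iter \<theta> k a ! j | a. a \<in> A})}"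

definition tilde_subst :: "nat \<Rightarrow> ('a \<Rightarrow> 'a list) \<Rightarrow> 'a set \<Rightarrow> 'a set list" where
  "tilde_subst L \<theta> M = map (\<lambda>j. {\<theta> a ! j | a. a \<in> M}) [0..<L]"

text \<open>The alphabet overline-\<X> and the product substitution Theta = theta v tilde-theta.\<close>

definition bar_columns :: "'a set \<Rightarrow> nat \<Rightarrow> ('a \<Rightarrow> 'a list) \<Rightarrow> ('a \<times> 'a set) set" where
  "bar_columns A L \<theta> = {(a, M). M \<in> min_columns A L \<theta> \<and> a \<in> M}"

definition join_subst :: "nat \<Rightarrow> ('a \<Rightarrow> 'a list) \<Rightarrow> ('a \<times> 'a set) \<Rightarrow> ('a \<times> 'a set) list" where
  "join_subst L \<theta> p = map (\<lambda>j. (\<theta> (fst p) ! j, tilde_subst L \<theta> (snd p) ! j)) [0..<L]"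

end

theory Submission
  imports Defs
begin

lemma concat_nth_fixed:
  assumes "\<forall>x\<in>set xs. length (f x) = L" "i < length xs" "j < L"
  shows "concat (map f xs) ! (i*L + j) = f (xs!i) ! j"
  using assms
proof (induction xs arbitrary: i)
  case Nil then show ?case by simp
next
  case (Cons x xs)
  show ?case
  proof (cases i)
    case 0 then show ?thesis using Cons.prems by (simp add: nth_append)
  next
    case (Suc i')
    have "concat (map f (x#xs)) ! (i*L + j) = concat (map f xs) ! (i'*L + j)"
      using Cons.prems Suc by (simp add: nth_append add.assoc)
    also have "\<dots> = f (xs!i') ! j" using Cons Suc by simp
    finally show ?thesis using Suc by simp
  qed
qed

lemma iter_len_set:
  assumes "\<forall>a\<in>A. length (\<theta> a) = L \<and> set (\<theta> a) \<subseteq> A" "a \<in> A"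
  shows "length (subst_iter \<theta> k a) = L^k \<and> set (subst_iter \<theta> k a) \<subseteq> A"
proof (induction k)
  case 0 then show ?case using assms by simp
next
  case (Suc k)
  have "length (concat (map \<theta> (subst_iter \<theta> k a))) = sum_list (map (length \<circ> \<theta>) (subst_iter \<theta> k a))"
    by (simp add: length_concat)
  also have "\<dots> = sum_list (map (\<lambda>_. L) (subst_iter \<theta> k a))"
    by (rule arg_cong[where f=sum_list], rule map_cong) (use Suc assms in auto)
  also have "\<dots> = L * L^k" using Suc by (simp add: sum_list_triv)
  finally show ?case using Suc assms by auto
qed

lemma concat_concat': "concat (concat xss) = concat (map concat xss)"
  by (induction xss) auto

lemma iter_add:
  "subst_iter \<zeta> (m+n) a = concat (map (subst_iter \<zeta> n) (subst_iter \<zeta> m a))"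
proof (induction n)
  case 0 then show ?case by (simp add: map_concat)
next
  case (Suc n)
  then show ?case by (simp add: map_concat concat_concat' comp_def)
qed

lemma iter_add_nth:
  assumes "\<forall>a\<in>A. length (\<theta> a) = L \<and> set (\<theta> a) \<subseteq> A" "a \<in> A" "i < L^m" "j < L^n"
  shows "subst_iter \<theta> (m+n) a ! (i*L^n + j) = subst_iter \<theta> n (subst_iter \<theta> m a ! i) ! j"
proof -
  have "\<forall>x\<in>set (subst_iter \<theta> m a). length (subst_iter \<theta> n x) = L^n"
    using iter_len_set[OF assms(1)] assms(2) by blast
  moreover have "i < length (subst_iter \<theta> m a)" using iter_len_set[OF assms(1,2)] assms(3) by simp
  ultimately show ?thesis unfolding iter_add using assms(4) by (rule concat_nth_fixed)
qed

lemma idx_bound: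
  fixes i j m n L :: nat
  assumes "i < L^m" "j < L^n"
  shows "i*L^n + j < L^(m+n)"
proof -
  have "i*L^n + j < i*L^n + L^n" using assms by simp
  also have "\<dots> = (i+1)*L^n" by simp
  also have "\<dots> \<le> L^m * L^n" using assms(1) by (intro mult_right_mono) auto
  finally show ?thesis by (simp add: power_add)
qed

lemma join_iter:
  assumes H: "\<forall>a\<in>A. length (\<theta> a) = L \<and> set (\<theta> a) \<subseteq> A" and "a \<in> A" "M \<subseteq> A" and L0: "L > 0"
  shows "length (subst_iter (join_subst L \<theta>) k (a, M)) = L^k \<and>
    (\<forall>j<L^k. subst_iter (join_subst L \<theta>) k (a, M) ! j
        = (subst_iter \<theta> k a ! j, {subst_iter \<theta> k b ! j | b. b \<in> M}))"
proof (induction k)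
  case 0 then show ?case by auto
next
  case (Suc k)
  let ?T = "join_subst L \<theta>"
  let ?xs = "subst_iter ?T k (a, M)"
  have lenT: "\<forall>x\<in>set ?xs. length (?T x) = L" by (simp add: join_subst_def)
  have len: "length (subst_iter ?T (Suc k) (a, M)) = L^Suc k"
  proof -
    have "length (concat (map ?T ?xs)) = sum_list (map (length \<circ> ?T) ?xs)"
      by (simp add: length_concat)
    also have "\<dots> = sum_list (map (\<lambda>_. L) ?xs)"
      by (rule arg_cong[where f=sum_list], rule map_cong) (use lenT in auto)
    also have "\<dots> = L * L^k" using Suc by (simp add: sum_list_triv)
    finally show ?thesis by simp
  qed
  show ?case
  proof (intro conjI allI impI)
    show "length (subst_iter ?T (Suc k) (a, M)) = L^Suc k" by (rule len)
    fix j' assume j': "j' < L^Suc k"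
    define i where "i = j' div L"
    define j where "j = j' mod L"
    have jL: "j < L" using L0 by (simp add: j_def)
    have ji: "j' = i*L + j" by (simp add: i_def j_def)
    have iL: "i < L^k" using j' L0 unfolding i_def
      by (simp add: less_mult_imp_div_less mult.commute)
    have nthb: "subst_iter \<theta> (Suc k) b ! j' = \<theta> (subst_iter \<theta> k b ! i) ! j" if "b \<in> A" for b
      unfolding ji subst_iter.simps
      by (rule concat_nth_fixed) (use iter_len_set[OF H that, of k] H iL jL in auto)
    have "subst_iter ?T (Suc k) (a, M) ! j' = ?T (?xs ! i) ! j"
      unfolding ji subst_iter.simps
      by (rule concat_nth_fixed) (use lenT Suc iL jL in auto)
    also have "\<dots> = ?T (subst_iter \<theta> k a ! i, {subst_iter \<theta> k b ! i | b. b \<in> M}) ! j"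
      using Suc iL by simp
    also have "\<dots> = (\<theta> (subst_iter \<theta> k a ! i) ! j,
         {\<theta> c ! j | c. c \<in> {subst_iter \<theta> k b ! i | b. b \<in> M}})"
      using jL by (simp add: join_subst_def tilde_subst_def)
    also have "\<dots> = (subst_iter \<theta> (Suc k) a ! j', {subst_iter \<theta> (Suc k) b ! j' | b. b \<in> M})"
    proof -
      have "{subst_iter \<theta> (Suc k) b ! j' | b. b \<in> M} = {\<theta> (subst_iter \<theta> k b ! i) ! j | b. b \<in> M}"
      proof -
        have eq: "\<And>b. b \<in> M \<Longrightarrow> subst_iter \<theta> (Suc k) b ! j' = \<theta> (subst_iter \<theta> k b ! i) ! j"
          using nthb assms(3) by blast
        show ?thesis by (rule Collect_cong) (metis eq)
      qed
      then show ?thesis using nthb[OF assms(2)] by (simp del: subst_iter.simps, blast)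
    qed
    finally show "subst_iter ?T (Suc k) (a, M) ! j' =
      (subst_iter \<theta> (Suc k) a ! j', {subst_iter \<theta> (Suc k) b ! j' | b. b \<in> M})" .
  qed
qed

lemma cards_finite:
  assumes "finite B"
  shows "finite {card {F k j b | b. b \<in> B} | k j. P k j}"
proof (rule finite_subset[of _ "{..card B}"])
  show "{card {F k j b | b. b \<in> B} | k j. P k j} \<subseteq> {..card B}"
  proof
    fix x assume "x \<in> {card {F k j b | b. b \<in> B} | k j. P k j}"
    then obtain k j where x: "x = card {F k j b | b. b \<in> B}" by blast
    have "{F k j b | b. b \<in> B} = F k j ` B" by blast
    then show "x \<in> {..card B}" using x card_image_le[OF assms] by simp
  qed
qed simp

theorem mainTheorem14:
  fixes A :: "'a set" and \<theta> :: "'a \<Rightarrow> 'a list" and L :: nat and a\<^sub>0 :: 'a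
  assumes "finite A" and "A \<noteq> {}"
    and "L \<ge> 2"
    and "\<forall>a\<in>A. length (\<theta> a) = L \<and> set (\<theta> a) \<subseteq> A"
    and "primitive_subst A \<theta>"
    and "a\<^sub>0 \<in> A" and "\<theta> a\<^sub>0 ! 0 = a\<^sub>0"
    and "inj_on \<theta> A"
    and "infinite (subshift A \<theta>)"
  shows "column_number (bar_columns A L \<theta>) L (join_subst L \<theta>) = column_number A L \<theta>"
proof -
  note H = assms(4)
  have L0: "L > 0" using assms(3) by simp
  define c where "c = column_number A L \<theta>"
  define S where "S = {card {subst_iter \<theta> k b ! j | b. b \<in> A} | k j. k \<ge> 1 \<and> j < L ^ k}"
  have c_def': "c = Min S" unfolding c_def S_def column_number_def ..
  have finS: "finite S" unfolding S_def by (rule cards_finite[OF assms(1)])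
  have neS: "S \<noteq> {}" unfolding S_def using L0 by fastforce
  have "c \<in> S" using Min_in[OF finS neS] c_def' by simp
  then obtain k0 j0 where k0: "k0 \<ge> 1" "j0 < L^k0"
    and cC: "c = card {subst_iter \<theta> k0 b ! j0 | b. b \<in> A}" unfolding S_def by blast
  define C where "C = {subst_iter \<theta> k0 b ! j0 | b. b \<in> A}"
  have CA: "C \<subseteq> A"
  proof
    fix x assume "x \<in> C"
    then obtain b where b: "b \<in> A" "x = subst_iter \<theta> k0 b ! j0" unfolding C_def by blast
    have "length (subst_iter \<theta> k0 b) = L^k0 \<and> set (subst_iter \<theta> k0 b) \<subseteq> A"
      by (rule iter_len_set[OF H b(1)])
    then show "x \<in> A" using b k0 nth_mem by (metis subsetD)
  qed
  have finC: "finite C" using CA assms(1) finite_subset by blast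
  have cardC: "card C = c" using cC C_def by simp
  have CX: "C \<in> min_columns A L \<theta>"
    unfolding min_columns_def using CA cardC c_def k0 C_def by blast
  have G: "c \<le> card {subst_iter \<theta> k b ! j | b. b \<in> M}"
    if M: "M \<in> min_columns A L \<theta>" and k: "k \<ge> 1" and j: "j < L^k" for M k j
  proof -
    obtain k1 j1 where k1: "k1 \<ge> 1" "j1 < L^k1" and Me: "M = {subst_iter \<theta> k1 a ! j1 | a. a \<in> A}"
      using M unfolding min_columns_def by blast
    have "{subst_iter \<theta> k b ! j | b. b \<in> M} = {subst_iter \<theta> (k1+k) a ! (j1*L^k+j) | a. a \<in> A}"
      unfolding Me using iter_add_nth[OF H _ k1(2) j] by (auto simp del: subst_iter.simps; metis)
    moreover have "card {subst_iter \<theta> (k1+k) a ! (j1*L^k+j) | a. a \<in> A} \<in> S"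
      unfolding S_def using k1 idx_bound[OF k1(2) j] by fastforce
    ultimately show ?thesis using Min_le[OF finS] c_def' by simp
  qed
  define B where "B = bar_columns A L \<theta>"
  define T where "T = join_subst L \<theta>"
  define ST where "ST = {card {subst_iter T k b ! j | b. b \<in> B} | k j. k \<ge> 1 \<and> j < L ^ k}"
  have lhs: "column_number B L T = Min ST" unfolding ST_def column_number_def ..
  have BA: "B \<subseteq> A \<times> Pow A" unfolding B_def bar_columns_def min_columns_def by blast
  have finB: "finite B" using BA assms(1) finite_subset by blast
  have finST: "finite ST" unfolding ST_def by (rule cards_finite[OF finB])
  have neST: "ST \<noteq> {}" unfolding ST_def using L0 by fastforce
  have JI: "subst_iter T k (a, M) ! j = (subst_iter \<theta> k a ! j, {subst_iter \<theta> k b ! j | b. b \<in> M})"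
    if "(a, M) \<in> B" "j < L^k" for a M k j
  proof -
    have "a \<in> A" "M \<subseteq> A" using that BA by auto
    then show ?thesis using join_iter[OF H _ _ L0] that unfolding T_def by blast
  qed
  have ge: "c \<le> Min ST"
  proof -
    have "Min ST \<in> ST" using Min_in[OF finST neST] .
    then obtain k j where kj: "k \<ge> 1" "j < L^k"
      and mn: "Min ST = card {subst_iter T k b ! j | b. b \<in> B}" unfolding ST_def by blast
    define W where "W = {subst_iter T k b ! j | b. b \<in> B}"
    have "W = (\<lambda>b. subst_iter T k b ! j) ` B" unfolding W_def by blast
    then have finW: "finite W" using finB by simp
    define Tk where "Tk = {subst_iter \<theta> k b ! j | b. b \<in> C}"
    have "Tk \<subseteq> fst ` W"
    proof
      fix x assume "x \<in> Tk"
      then obtain b where b: "b \<in> C" "x = subst_iter \<theta> k b ! j" unfolding Tk_def by blast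
      have bB: "(b, C) \<in> B" unfolding B_def bar_columns_def using CX b by blast
      have "subst_iter T k (b, C) ! j = (x, Tk)" using JI[OF bB kj(2)] b Tk_def by simp
      then have "(x, Tk) \<in> W" unfolding W_def using bB by force
      then show "x \<in> fst ` W" by force
    qed
    then have "card Tk \<le> card W"
      using card_mono[OF finite_imageI[OF finW]] card_image_le[OF finW] le_trans by blast
    moreover have "c \<le> card Tk" unfolding Tk_def by (rule G[OF CX kj])
    ultimately show ?thesis using mn W_def by simp
  qed
  have le: "Min ST \<le> c"
  proof -
    define W where "W = {subst_iter T k0 b ! j0 | b. b \<in> B}"
    have "card W \<in> ST" unfolding ST_def W_def using k0 by blast
    then have m: "Min ST \<le> card W" using Min_le[OF finST] by blast
    have "W \<subseteq> C \<times> {C}"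
    proof
      fix x assume "x \<in> W"
      then obtain a M where aM: "(a, M) \<in> B" "x = subst_iter T k0 (a, M) ! j0"
        unfolding W_def by auto
      have MX: "M \<in> min_columns A L \<theta>" and aM': "a \<in> M"
        using aM(1) unfolding B_def bar_columns_def by auto
      have MA: "M \<subseteq> A" using MX unfolding min_columns_def by blast
      have sub: "{subst_iter \<theta> k0 b ! j0 | b. b \<in> M} \<subseteq> C" unfolding C_def using MA by blast
      have "c \<le> card {subst_iter \<theta> k0 b ! j0 | b. b \<in> M}" by (rule G[OF MX k0])
      then have eqC: "{subst_iter \<theta> k0 b ! j0 | b. b \<in> M} = C"
        using card_subset_eq[OF finC sub] card_mono[OF finC sub] cardC by simp
      have "subst_iter \<theta> k0 a ! j0 \<in> C" using sub aM' by blast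
      then show "x \<in> C \<times> {C}" using JI[OF aM(1) k0(2)] aM(2) eqC by simp
    qed
    then have "card W \<le> card (C \<times> {C})" using finC by (intro card_mono) auto
    also have "\<dots> = c" using cardC by (simp add: card_cartesian_product)
    finally show ?thesis using m by simp
  qed
  show ?thesis using ge le lhs c_def B_def T_def by simp
qed

end
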